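(* Let $m\ge 3$, $n=2m$, $\tau(v)=n+1-v$ for $v\in[n]$, and let $G$ be a graph on $[n]$ such that every $3$-set $S\subseteq[n]$ satisfies $|E(G[S])|+|E(G[\tau(S)])|\ge 2$. Define the graph $W$ on $[m]$ by: $\{i,j\}$ is an edge of $W$ iff there is exactly one edge of $G$ with one endpoint in $\{i,\tau(i)\}$ and the other in $\{j,\tau(j)\}$. If $i,j,k\in[m]$ are distinct with $j,k\in N_W(i)$, then there are at least $3$ edges of $G$ with one endpoint in $\{j,\tau(j)\}$ and the other in $\{k,\tau(k)\}$. In particular $W$ is triangle-free.
   Context: $G[A]$ is the induced subgraph on $A$; $N_W(i)$ is the set of neighbours of $i$ in $W$. *)

theory Defs
  imports Main
begin

definition simple_graph_on :: "nat set \<Rightarrow> nat set set \<Rightarrow> bool" where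
  "simple_graph_on V E \<longleftrightarrow> (\<forall>e\<in>E. e \<subseteq> V \<and> card e = 2)"

definition induced_edges :: "nat set set \<Rightarrow> nat set \<Rightarrow> nat" where
  "induced_edges E S = card {e\<in>E. e \<subseteq> S}"

definition cross_edges :: "nat set set \<Rightarrow> nat set \<Rightarrow> nat set \<Rightarrow> nat" where
  "cross_edges E A B = card {e\<in>E. \<exists>a\<in>A. \<exists>b\<in>B. e = {a, b}}"

definition tau :: "nat \<Rightarrow> nat \<Rightarrow> nat" where
  "tau n v = n + 1 - v"

definition W_adj :: "nat \<Rightarrow> nat set set \<Rightarrow> nat \<Rightarrow> nat \<Rightarrow> bool" where
  "W_adj m E i j \<longleftrightarrow> i \<in> {1..m} \<and> j \<in> {1..m} \<and> i \<noteq> j \<and>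
     cross_edges E {i, tau (2*m) i} {j, tau (2*m) j} = 1"

end

theory Submission
  imports Defs
begin

definition gg :: "nat set set \<Rightarrow> nat \<Rightarrow> nat \<Rightarrow> nat" where
  "gg G u v = (if {u,v} \<in> G then 1 else 0)"

lemma card_filter_sum: "finite X \<Longrightarrow> card {e\<in>X. P e} = (\<Sum>e\<in>X. if P e then 1 else (0::nat))"
  by (simp add: sum.If_cases Int_def conj_commute)

lemma cross4:
  assumes "distinct [a1,a2,b1,b2]"
  shows "cross_edges G {a1,a2} {b1,b2} = gg G a1 b1 + gg G a1 b2 + gg G a2 b1 + gg G a2 b2"
proof -
  have "{e\<in>G. \<exists>a\<in>{a1,a2}. \<exists>b\<in>{b1,b2}. e = {a, b}} = {e\<in>{{a1,b1},{a1,b2},{a2,b1},{a2,b2}}. e \<in> G}"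
    by auto
  moreover have "card {e\<in>{{a1,b1},{a1,b2},{a2,b1},{a2,b2}}. e \<in> G} = gg G a1 b1 + gg G a1 b2 + gg G a2 b1 + gg G a2 b2"
    using assms by (subst card_filter_sum) (auto simp: gg_def doubleton_eq_iff)
  ultimately show ?thesis unfolding cross_edges_def by simp
qed
lemma ind3:
  assumes "distinct [x,y,z]" "\<forall>e\<in>G. card e = 2"
  shows "induced_edges G {x,y,z} = gg G x y + gg G x z + gg G y z"
proof -
  have "{e\<in>G. e \<subseteq> {x,y,z}} = {e\<in>{{x,y},{x,z},{y,z}}. e \<in> G}"
  proof (rule set_eqI, rule iffI)
    fix e assume "e \<in> {e\<in>G. e \<subseteq> {x,y,z}}"
    then have e: "e \<in> G" "e \<subseteq> {x,y,z}" by auto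
    then obtain a b where ab: "e = {a,b}" "a \<noteq> b" using assms(2) by (meson card_2_iff)
    have "a \<in> {x,y,z}" "b \<in> {x,y,z}" using e(2) ab(1) by auto
    then have "e = {x, y} \<or> e = {x, z} \<or> e = {y, z}" using ab by (auto simp: insert_commute)
    then show "e \<in> {e\<in>{{x,y},{x,z},{y,z}}. e \<in> G}" using e by blast
  next
    fix e assume "e \<in> {e\<in>{{x,y},{x,z},{y,z}}. e \<in> G}"
    then show "e \<in> {e\<in>G. e \<subseteq> {x,y,z}}" by auto
  qed
  moreover have "card {e\<in>{{x,y},{x,z},{y,z}}. e \<in> G} = gg G x y + gg G x z + gg G y z"
    using assms by (subst card_filter_sum) (auto simp: gg_def doubleton_eq_iff)
  ultimately show ?thesis unfolding induced_edges_def by simp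
qed

lemma tri:
  assumes n: "n = 2 * m"
    and sg: "simple_graph_on {1..n} G"
    and hyp: "\<forall>S. S \<subseteq> {1..n} \<and> card S = 3 \<longrightarrow>
           induced_edges G S + induced_edges G (tau n ` S) \<ge> 2"
    and d: "distinct [x,y,z]" "distinct [tau n x, tau n y, tau n z]"
    and r: "x \<in> {1..n}" "y \<in> {1..n}" "z \<in> {1..n}"
  shows "gg G x y + gg G x z + gg G y z + gg G (tau n x) (tau n y) + gg G (tau n x) (tau n z) + gg G (tau n y) (tau n z) \<ge> 2"
proof -
  have c2: "\<forall>e\<in>G. card e = 2" using sg unfolding simple_graph_on_def by blast
  have c: "card {x,y,z} = 3" using d by simp
  have s: "{x,y,z} \<subseteq> {1..n}" using r by blast
  have im: "tau n ` {x,y,z} = {tau n x, tau n y, tau n z}" by simp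
  have "induced_edges G {x,y,z} + induced_edges G (tau n ` {x,y,z}) \<ge> 2"
    using hyp[rule_format, of "{x,y,z}"] c s by blast
  then show ?thesis unfolding im using ind3[OF d(1) c2] ind3[OF d(2) c2] by simp
qed

theorem mainTheorem7:
  fixes m n :: nat and G :: "nat set set"
  assumes "m \<ge> 3" and "n = 2 * m"
    and "simple_graph_on {1..n} G"
    and "\<forall>S. S \<subseteq> {1..n} \<and> card S = 3 \<longrightarrow>
           induced_edges G S + induced_edges G (tau n ` S) \<ge> 2"
  shows "(\<forall>i j k. i \<in> {1..m} \<and> j \<in> {1..m} \<and> k \<in> {1..m} \<and>
            i \<noteq> j \<and> i \<noteq> k \<and> j \<noteq> k \<and> W_adj m G i j \<and> W_adj m G i k \<longrightarrow>
            cross_edges G {j, tau n j} {k, tau n k} \<ge> 3)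
       \<and> (\<nexists>i j k. W_adj m G i j \<and> W_adj m G j k \<and> W_adj m G i k)"
proof -
  let ?t = "tau n"
  have tt: "\<And>v. v \<in> {1..n} \<Longrightarrow> ?t (?t v) = v" by (auto simp: tau_def)
  have tr: "\<And>v. v \<in> {1..m} \<Longrightarrow> ?t v \<in> {m+1..n}" using assms(2) by (auto simp: tau_def)
  have c2: "\<forall>e\<in>G. card e = 2" using assms(3) unfolding simple_graph_on_def by blast
  have P1: "\<forall>i j k. i \<in> {1..m} \<and> j \<in> {1..m} \<and> k \<in> {1..m} \<and>
            i \<noteq> j \<and> i \<noteq> k \<and> j \<noteq> k \<and> W_adj m G i j \<and> W_adj m G i k \<longrightarrow>
            cross_edges G {j, tau n j} {k, tau n k} \<ge> 3"
  proof (intro allI impI)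
    fix i j k assume h: "i \<in> {1..m} \<and> j \<in> {1..m} \<and> k \<in> {1..m} \<and>
            i \<noteq> j \<and> i \<noteq> k \<and> j \<noteq> k \<and> W_adj m G i j \<and> W_adj m G i k"
    have ri: "i \<in> {1..n}" "j \<in> {1..n}" "k \<in> {1..n}" using h assms(2) by auto
    have tm: "?t i \<in> {m+1..n}" "?t j \<in> {m+1..n}" "?t k \<in> {m+1..n}" using h assms(2) by (auto simp: tau_def)
    have ti: "?t i \<in> {1..n}" "?t j \<in> {1..n}" "?t k \<in> {1..n}" using tm by auto
    have ttj: "?t (?t j) = j" and ttk: "?t (?t k) = k" using ri tt by auto
    have inj: "?t i \<noteq> ?t j" "?t i \<noteq> ?t k" "?t j \<noteq> ?t k" using h assms(2) by (auto simp: tau_def)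
    have xij: "cross_edges G {i, ?t i} {j, ?t j} = 1" and xik: "cross_edges G {i, ?t i} {k, ?t k} = 1"
      using h assms(2) unfolding W_adj_def by auto
    have cij: "gg G i j + gg G i (?t j) + gg G (?t i) j + gg G (?t i) (?t j) = 1"
      using xij cross4[of i "?t i" j "?t j" G] h tm inj by auto
    have cik: "gg G i k + gg G i (?t k) + gg G (?t i) k + gg G (?t i) (?t k) = 1"
      using xik cross4[of i "?t i" k "?t k" G] h tm inj by auto
    have cjk: "cross_edges G {j, ?t j} {k, ?t k} = gg G j k + gg G j (?t k) + gg G (?t j) k + gg G (?t j) (?t k)"
      using cross4[of j "?t j" k "?t k" G] h tm inj by auto
    have T1: "gg G i j + gg G i k + gg G j k + gg G (?t i) (?t j) + gg G (?t i) (?t k) + gg G (?t j) (?t k) \<ge> 2"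
      using tri[OF assms(2,3,4), of i j k] h inj ri ti tm unfolding ttj ttk by auto
    have T2: "gg G i j + gg G i (?t k) + gg G j (?t k) + gg G (?t i) (?t j) + gg G (?t i) k + gg G (?t j) k \<ge> 2"
      using tri[OF assms(2,3,4), of i j "?t k"] h inj ri ti tm unfolding ttj ttk by auto
    have T3: "gg G i (?t j) + gg G i k + gg G (?t j) k + gg G (?t i) j + gg G (?t i) (?t k) + gg G j (?t k) \<ge> 2"
      using tri[OF assms(2,3,4), of i "?t j" k] h inj ri ti tm unfolding ttj ttk by auto
    have T4: "gg G i (?t j) + gg G i (?t k) + gg G (?t j) (?t k) + gg G (?t i) j + gg G (?t i) k + gg G j k \<ge> 2"
      using tri[OF assms(2,3,4), of i "?t j" "?t k"] h inj ri ti tm unfolding ttj ttk by auto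
    show "cross_edges G {j, tau n j} {k, tau n k} \<ge> 3"
    proof -
      define A0 where "A0 = gg G i j + gg G (?t i) (?t j)"
      define A1 where "A1 = gg G i (?t j) + gg G (?t i) j"
      define B0 where "B0 = gg G i k + gg G (?t i) (?t k)"
      define B1 where "B1 = gg G i (?t k) + gg G (?t i) k"
      define C0 where "C0 = gg G j k + gg G (?t j) (?t k)"
      define C1 where "C1 = gg G j (?t k) + gg G (?t j) k"
      have e1: "A0 + B0 + C0 \<ge> 2" using T1 unfolding A0_def B0_def C0_def by linarith
      have e2: "A0 + B1 + C1 \<ge> 2" using T2 unfolding A0_def B1_def C1_def by linarith
      have e3: "A1 + B0 + C1 \<ge> 2" using T3 unfolding A1_def B0_def C1_def by linarith
      have e4: "A1 + B1 + C0 \<ge> 2" using T4 unfolding A1_def B1_def C0_def by linarith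
      have a: "A0 + A1 = 1" using cij unfolding A0_def A1_def by linarith
      have b: "B0 + B1 = 1" using cik unfolding B0_def B1_def by linarith
      have c: "cross_edges G {j, tau n j} {k, tau n k} = C0 + C1" using cjk unfolding C0_def C1_def by linarith
      have "A0 = 0 \<or> A0 = 1" "B0 = 0 \<or> B0 = 1" using a b by linarith+
      then show ?thesis unfolding c using e1 e2 e3 e4 a b by (elim disjE) linarith+
    qed
  qed
  moreover have "\<nexists>i j k. W_adj m G i j \<and> W_adj m G j k \<and> W_adj m G i k"
  proof
    assume "\<exists>i j k. W_adj m G i j \<and> W_adj m G j k \<and> W_adj m G i k"
    then obtain i j k where w: "W_adj m G i j" "W_adj m G j k" "W_adj m G i k" by blast
    then have "cross_edges G {j, tau n j} {k, tau n k} \<ge> 3" using P1 unfolding W_adj_def by blast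
    moreover have "cross_edges G {j, tau n j} {k, tau n k} = 1" using w(2) assms(2) unfolding W_adj_def by simp
    ultimately show False by simp
  qed
  ultimately show ?thesis by blast
qed

end
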